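(* Given a closed $\lambda$-abstraction $\lambda x.\vec t$, we have $\lambda x.\vec t\in[\![\sharp\mathbb B\rightarrow\sharp\mathbb B]\!]$ if and only if there are two value distributions $\vec v_1,\vec v_2\in[\![\sharp\mathbb B]\!]$ such that $\vec t[x:=\mathtt{tt}]\succ^*\vec v_1$, $\vec t[x:=\mathtt{ff}]\succ^*\vec v_2$ and $\langle\vec v_1|\vec v_2\rangle=0$.
   Context: Calculus. Pure values: $v,w::=x\mid\lambda x.\vec{s}\mid *\mid (v_1,v_2)\mid \mathtt{inl}(v)\mid\mathtt{inr}(v)$. Pure terms: $s,t::=v\mid s\,t\mid t;\vec{s}\mid \mathtt{let}\,(x_1,x_2)=t\,\mathtt{in}\,\vec{s}\mid \mathtt{match}\,t\,\{\mathtt{inl}\,x_1\mapsto\vec{s}_1\mid\mathtt{inr}\,x_2\mapsto\vec{s}_2\}$. Term distributions: $\vec{t}::=\vec{0}\mid t\mid \vec{s}+\vec{t}\mid\alpha\cdot\vec{t}$ ($\alpha\in\mathbb{C}$), considered at top level modulo the weak-vector-space congruence $\equiv$ (commutative monoid for $+,\vec0$; $1\cdot\vec t\equiv\vec t$; $\alpha\cdot(\beta\cdot\vec t)\equiv\alpha\beta\cdot\vec t$; both distributivity laws), which does not act inside pure terms and does not identify $0\cdot t$ with $\vec 0$; every distribution has a unique canonical form $\sum_i\alpha_it_i$ with distinct pure $t_i$. Constructs are extended by linearity. $\mathtt{tt}:=\mathtt{inl}( * )$, $\mathtt{ff}:=\mathtt{inr}( * )$. $\vec t[x:=w]$ is substitution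 of a pure value; $\vec t\langle x:=\vec w\rangle=\sum_j\beta_j\vec t[x:=w_j]$ for $\vec w=\sum_j\beta_jw_j$. Atomic evaluation $\triangleright$: $(\lambda x.\vec t)v\triangleright\vec t[x:=v]$, $*;\vec s\triangleright\vec s$, $\mathtt{let}\,(x,y)=(v,w)\,\mathtt{in}\,\vec s\triangleright\vec s[x:=v,y:=w]$, $\mathtt{match}\,\mathtt{inl}(v)\{\ldots\}\triangleright\vec s_1[x_1:=v]$, $\mathtt{match}\,\mathtt{inr}(v)\{\ldots\}\triangleright\vec s_2[x_2:=v]$, plus closure rules evaluating the argument of an application, then the function once the argument is a value, and the scrutinee of $;$, let, match. $\vec t\succ\vec t'$ iff $\vec t\equiv\alpha\cdot s+\vec r$, $\vec t'\equiv\alpha\cdot\vec s'+\vec r$ with $s\triangleright\vec s'$; $\succ^*$ is its reflexive-transitive closure. Semantics. For closed value distributions in canonical form, $\langle\sum_i\alpha_iv_i|\sum_j\beta_jw_j\rangle=\sum_{i,j}\overline{\alpha_i}\beta_j\delta_{v_i,w_j}$, $\|\vec v\|=\sqrt{\langle\vec v|\vec v\rangle}$, $\mathcal S$ the unit sphere. $[\![\mathbb U]\!]=\{*\}$, $[\![A+B]\!]=\{\mathtt{inl}(\vec v):\vec v\in[\![A]\!]\}\cup\{\mathtt{inr}(\vec w):\vec w\in[\![B]\!]\}$, $[\![\sharp A]\!]=\mathrm{Span}([\![A]\!])\cap\mathcal S$, $\mathbb B=\mathbb U+\mathbb U$, $[\![A\rightarrow B]\!]=\{\lambda x.\vec t\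 \text{closed}:\forall\vec v\in[\![A]\!],\ \vec t\langle x:=\vec v\rangle\Vdash B\}$ with $\vec t\Vdash B$ meaning $\vec t\succ^*\vec v$ for some $\vec v\in[\![B]\!]$. *)

theory Defs
  imports Complex_Main
begin

type_synonym name = string

text \<open>Pure values, pure terms and (syntactic) term distributions.  Inside pure
terms distributions are kept as syntax trees (the congruence does not act there).\<close>

datatype val = Var name | Lam name dist | Star | Pair val val | Inl val | Inr val
and trm = Val val | App trm trm | Seq trm dist
        | LetP name name trm dist
        | Match trm name dist name dist
and dist = DZero | DTm trm | DPlus dist dist | DScal complex dist

definition tt :: val where "tt = Inl Star"
definition ff :: val where "ff = Inr Star"

primrec fvv :: "val \<Rightarrow> name set" and fvt :: "trm \<Rightarrow> name set" and fvd :: "dist \<Rightarrow> name set" where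
  "fvv (Var y) = {y}"
| "fvv (Lam y d) = fvd d - {y}"
| "fvv Star = {}"
| "fvv (Pair v w) = fvv v \<union> fvv w"
| "fvv (Inl v) = fvv v"
| "fvv (Inr v) = fvv v"
| "fvt (Val v) = fvv v"
| "fvt (App s t) = fvt s \<union> fvt t"
| "fvt (Seq t d) = fvt t \<union> fvd d"
| "fvt (LetP y z t d) = fvt t \<union> (fvd d - {y, z})"
| "fvt (Match t y d1 z d2) = fvt t \<union> (fvd d1 - {y}) \<union> (fvd d2 - {z})"
| "fvd DZero = {}"
| "fvd (DTm t) = fvt t"
| "fvd (DPlus a b) = fvd a \<union> fvd b"
| "fvd (DScal \<alpha> a) = fvd a"

definition closed_v :: "val \<Rightarrow> bool" where "closed_v v \<longleftrightarrow> fvv v = {}"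

text \<open>\<open>substd x w d\<close> is \<open>d[x:=w]\<close>.  Only closed values are ever substituted
(all reductions happen on closed terms), so no renaming is needed.\<close>

primrec substv :: "name \<Rightarrow> val \<Rightarrow> val \<Rightarrow> val"
  and substt :: "name \<Rightarrow> val \<Rightarrow> trm \<Rightarrow> trm"
  and substd :: "name \<Rightarrow> val \<Rightarrow> dist \<Rightarrow> dist" where
  "substv x w (Var y) = (if x = y then w else Var y)"
| "substv x w (Lam y d) = (if x = y then Lam y d else Lam y (substd x w d))"
| "substv x w Star = Star"
| "substv x w (Pair v1 v2) = Pair (substv x w v1) (substv x w v2)"
| "substv x w (Inl v) = Inl (substv x w v)"
| "substv x w (Inr v) = Inr (substv x w v)"
| "substt x w (Val v) = Val (substv x w v)"
| "substt x w (App s t) = App (substt x w s) (substt x w t)"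
| "substt x w (Seq t d) = Seq (substt x w t) (substd x w d)"
| "substt x w (LetP y z t d) =
     LetP y z (substt x w t) (if x = y \<or> x = z then d else substd x w d)"
| "substt x w (Match t y d1 z d2) =
     Match (substt x w t) y (if x = y then d1 else substd x w d1)
                          z (if x = z then d2 else substd x w d2)"
| "substd x w DZero = DZero"
| "substd x w (DTm t) = DTm (substt x w t)"
| "substd x w (DPlus a b) = DPlus (substd x w a) (substd x w b)"
| "substd x w (DScal \<alpha> a) = DScal \<alpha> (substd x w a)"

fun dmap :: "(trm \<Rightarrow> trm) \<Rightarrow> dist \<Rightarrow> dist" where
  "dmap f DZero = DZero"
| "dmap f (DTm t) = DTm (f t)"
| "dmap f (DPlus a b) = DPlus (dmap f a) (dmap f b)"
| "dmap f (DScal \<alpha> a) = DScal \<alpha> (dmap f a)"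

text \<open>A canonical form \<open>\<Sum>\<^sub>i \<alpha>\<^sub>i t\<^sub>i\<close> (distinct \<open>t\<^sub>i\<close>, coefficients possibly 0)
is a finite partial map from pure terms to coefficients.\<close>

type_synonym cdist = "trm \<Rightarrow> complex option"

definition madd :: "cdist \<Rightarrow> cdist \<Rightarrow> cdist" where
  "madd f g = (\<lambda>t. case (f t, g t) of
      (None, y) \<Rightarrow> y
    | (Some a, None) \<Rightarrow> Some a
    | (Some a, Some b) \<Rightarrow> Some (a + b))"

definition mscal :: "complex \<Rightarrow> cdist \<Rightarrow> cdist" where
  "mscal \<alpha> f = (\<lambda>t. map_option (\<lambda>a. \<alpha> * a) (f t))"

fun nf :: "dist \<Rightarrow> cdist" where
  "nf DZero = Map.empty"
| "nf (DTm t) = [t \<mapsto> 1]"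
| "nf (DPlus a b) = madd (nf a) (nf b)"
| "nf (DScal \<alpha> a) = mscal \<alpha> (nf a)"

definition equiv_dist :: "dist \<Rightarrow> dist \<Rightarrow> bool" where
  "equiv_dist d d' \<longleftrightarrow> nf d = nf d'"

inductive atomic :: "trm \<Rightarrow> dist \<Rightarrow> bool" where
  beta: "atomic (App (Val (Lam x d)) (Val v)) (substd x v d)"
| seq: "atomic (Seq (Val Star) d) d"
| letp: "atomic (LetP x y (Val (Pair v w)) d) (substd y w (substd x v d))"
| match_inl: "atomic (Match (Val (Inl v)) x1 d1 x2 d2) (substd x1 v d1)"
| match_inr: "atomic (Match (Val (Inr v)) x1 d1 x2 d2) (substd x2 v d2)"
| app_arg: "atomic t d \<Longrightarrow> atomic (App s t) (dmap (\<lambda>t'. App s t') d)"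
| app_fun: "atomic s d \<Longrightarrow> atomic (App s (Val v)) (dmap (\<lambda>s'. App s' (Val v)) d)"
| seq_ctx: "atomic t d \<Longrightarrow> atomic (Seq t e) (dmap (\<lambda>t'. Seq t' e) d)"
| let_ctx: "atomic t d \<Longrightarrow> atomic (LetP x y t e) (dmap (\<lambda>t'. LetP x y t' e) d)"
| match_ctx: "atomic t d \<Longrightarrow>
     atomic (Match t x1 e1 x2 e2) (dmap (\<lambda>t'. Match t' x1 e1 x2 e2) d)"

definition step :: "dist \<Rightarrow> dist \<Rightarrow> bool" where
  "step d d' \<longleftrightarrow> (\<exists>\<alpha> s s' r. atomic s s' \<and>
      equiv_dist d (DPlus (DScal \<alpha> (DTm s)) r) \<and>
      equiv_dist d' (DPlus (DScal \<alpha> s') r))"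

abbreviation steps :: "dist \<Rightarrow> dist \<Rightarrow> bool" where
  "steps \<equiv> step\<^sup>*\<^sup>*"

definition cinner :: "cdist \<Rightarrow> cdist \<Rightarrow> complex" where
  "cinner f g = (\<Sum>t\<in>dom f \<inter> dom g. cnj (the (f t)) * the (g t))"

definition cnorm :: "cdist \<Rightarrow> real" where
  "cnorm f = sqrt (Re (cinner f f))"

inductive in_span :: "cdist set \<Rightarrow> cdist \<Rightarrow> bool" for X where
  span_zero: "in_span X Map.empty"
| span_step: "in_span X f \<Longrightarrow> b \<in> X \<Longrightarrow> in_span X (madd f (mscal \<alpha> b))"

definition inl_map :: "cdist \<Rightarrow> cdist" where
  "inl_map f = (\<lambda>t. case t of Val (Inl v) \<Rightarrow> f (Val v) | _ \<Rightarrow> None)"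
definition inr_map :: "cdist \<Rightarrow> cdist" where
  "inr_map f = (\<lambda>t. case t of Val (Inr v) \<Rightarrow> f (Val v) | _ \<Rightarrow> None)"

definition list_dist :: "(complex \<times> val) list \<Rightarrow> dist" where
  "list_dist ws = foldr (\<lambda>(\<beta>, w) acc. DPlus (DScal \<beta> (DTm (Val w))) acc) ws DZero"

definition canon :: "(complex \<times> val) list \<Rightarrow> cdist \<Rightarrow> bool" where
  "canon ws f \<longleftrightarrow> distinct (map snd ws) \<and> nf (list_dist ws) = f"

definition lin_subst :: "name \<Rightarrow> dist \<Rightarrow> (complex \<times> val) list \<Rightarrow> dist" where
  "lin_subst x d ws = foldr (\<lambda>(\<beta>, w) acc. DPlus (DScal \<beta> (substd x w d)) acc) ws DZero"

datatype ty = TU | TSum ty ty | TSharp ty | TArr ty ty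

definition TB :: ty where "TB = TSum TU TU"

fun sem :: "ty \<Rightarrow> cdist set" where
  "sem TU = {[Val Star \<mapsto> 1]}"
| "sem (TSum A B) = inl_map ` sem A \<union> inr_map ` sem B"
| "sem (TSharp A) = {f. in_span (sem A) f \<and> cnorm f = 1}"
| "sem (TArr A B) = {[Val (Lam x d) \<mapsto> 1] | x d. closed_v (Lam x d) \<and>
      (\<forall>v \<in> sem A. \<forall>ws. canon ws v \<longrightarrow>
         (\<exists>d'. steps (lin_subst x d ws) d' \<and> nf d' \<in> sem B))}"

end

theory Submission imports Defs begin

definition vec :: "cdist \<Rightarrow> trm \<Rightarrow> complex" where
  "vec f u = (case f u of None \<Rightarrow> 0 | Some a \<Rightarrow> a)"

lemma dom_madd[simp]: "dom (madd f g) = dom f \<union> dom g"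
  by (auto simp: madd_def dom_def split: option.splits)
lemma dom_mscal[simp]: "dom (mscal a f) = dom f"
  by (auto simp: mscal_def)
lemma vec_madd[simp]: "vec (madd f g) u = vec f u + vec g u"
  by (auto simp: vec_def madd_def split: option.splits)
lemma vec_mscal[simp]: "vec (mscal a f) u = a * vec f u"
  by (auto simp: vec_def mscal_def split: option.splits)
lemma vec_single[simp]: "vec [s\<mapsto>c] u = (if u = s then c else 0)"
  by (simp add: vec_def)
lemma vec_empty[simp]: "vec Map.empty u = 0"
  by (simp add: vec_def)
lemma finite_nf[simp]: "finite (dom (nf d))"
  by (induction d rule: nf.induct) (auto simp del: fun_upd_apply)
lemma vec_notin: "u \<notin> dom f \<Longrightarrow> vec f u = 0"
  by (auto simp: vec_def domIff)

lemma cinner_sum: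
  assumes "finite S" "dom f \<subseteq> S"
  shows "cinner f g = (\<Sum>u\<in>S. cnj (vec f u) * vec g u)"
  unfolding cinner_def
proof (rule sum.mono_neutral_cong_left)
  show "finite S" by fact
  show "dom f \<inter> dom g \<subseteq> S" using assms by auto
  show "\<forall>i\<in>S - dom f \<inter> dom g. cnj (vec f i) * vec g i = 0"
    by (auto simp: vec_def split: option.splits)
  show "\<And>u. u \<in> dom f \<inter> dom g \<Longrightarrow> cnj (the (f u)) * the (g u) = cnj (vec f u) * vec g u"
    by (auto simp: vec_def)
qed

lemma atomic_Val[simp]: "\<not> atomic (Val v) d"
  by (auto elim: atomic.cases)

lemma atomic_det: "atomic s d1 \<Longrightarrow> atomic s d2 \<Longrightarrow> d1 = d2"
  by (induction arbitrary: d2 rule: atomic.induct) (erule atomic.cases; auto)+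

inductive E :: "trm \<Rightarrow> (trm \<Rightarrow> complex) \<Rightarrow> bool" where
  ev_val: "E (Val v) (\<lambda>u. if u = Val v then 1 else 0)"
| ev_step: "atomic s d \<Longrightarrow> (\<forall>u. u \<in> dom (nf d) \<longrightarrow> E u (g u)) \<Longrightarrow>
     E s (\<lambda>w. \<Sum>u\<in>dom (nf d). vec (nf d) u * g u w)"

lemma E_fun: "E s g1 \<Longrightarrow> E s g2 \<Longrightarrow> g1 = g2"
proof (induction arbitrary: g2 rule: E.induct)
  case (ev_val v)
  then show ?case by (auto elim: E.cases)
next
  case (ev_step s d g)
  from ev_step.prems ev_step.hyps(1) obtain g' where
    g2: "g2 = (\<lambda>w. \<Sum>u\<in>dom (nf d). vec (nf d) u * g' u w)"
    and h: "\<forall>u. u \<in> dom (nf d) \<longrightarrow> E u (g' u)"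
    by (cases rule: E.cases) (auto dest: atomic_det)
  have "\<And>u. u \<in> dom (nf d) \<Longrightarrow> g u = g' u" using ev_step.IH h by blast
  then show ?case unfolding g2 by (intro ext sum.cong) auto
qed

definition ok :: "cdist \<Rightarrow> bool" where "ok f \<longleftrightarrow> (\<forall>u\<in>dom f. \<exists>g. E u g)"
definition Gv :: "trm \<Rightarrow> trm \<Rightarrow> complex" where "Gv u = (THE g. E u g)"
definition W :: "cdist \<Rightarrow> trm \<Rightarrow> complex" where
  "W f w = (\<Sum>u\<in>dom f. vec f u * Gv u w)"

lemma Gv: "E u g \<Longrightarrow> Gv u = g"
  unfolding Gv_def using E_fun by blast

lemma Gv_E: "\<exists>g. E u g \<Longrightarrow> E u (Gv u)"
  using Gv by blast

lemma W_sum: "finite S \<Longrightarrow> dom f \<subseteq> S \<Longrightarrow> W f w = (\<Sum>u\<in>S. vec f u * Gv u w)"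
  unfolding W_def by (rule sum.mono_neutral_left) (auto simp: vec_notin)

lemma W_madd: "finite (dom f) \<Longrightarrow> finite (dom g) \<Longrightarrow> W (madd f g) w = W f w + W g w"
  using W_sum[of "dom f \<union> dom g" f w] W_sum[of "dom f \<union> dom g" g w]
    W_sum[of "dom f \<union> dom g" "madd f g" w]
  by (simp add: ring_distribs sum.distrib)

lemma W_mscal: "W (mscal a f) w = a * W f w"
  unfolding W_def by (simp add: sum_distrib_left mult.assoc)

lemma W_single: "W [s\<mapsto>1] w = Gv s w"
  unfolding W_def by simp

lemma step_nf: "step d d' \<Longrightarrow> \<exists>\<alpha> s s' r. atomic s s' \<and>
   nf d = madd (mscal \<alpha> [s\<mapsto>1]) (nf r) \<and> nf d' = madd (mscal \<alpha> (nf s')) (nf r)"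
  unfolding step_def equiv_dist_def by auto

lemma step_back:
  assumes "step d d'" "ok (nf d')"
  shows "ok (nf d) \<and> W (nf d) = W (nf d')"
proof -
  obtain \<alpha> s s' r where at: "atomic s s'"
    and d: "nf d = madd (mscal \<alpha> [s\<mapsto>1]) (nf r)"
    and d': "nf d' = madd (mscal \<alpha> (nf s')) (nf r)"
    using step_nf[OF assms(1)] by blast
  have okr: "ok (nf r)" using assms(2) d' by (auto simp: ok_def)
  have oks': "\<forall>u. u \<in> dom (nf s') \<longrightarrow> E u (Gv u)"
    using assms(2) d' unfolding ok_def by (metis UnCI Gv_E dom_madd dom_mscal)
  have Es: "E s (\<lambda>w. \<Sum>u\<in>dom (nf s'). vec (nf s') u * Gv u w)"
    by (rule ev_step[OF at oks'])
  hence Gs: "Gv s = W (nf s')" by (simp add: Gv W_def[abs_def])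
  have "ok (nf d)" using okr Es by (auto simp: ok_def d)
  moreover have "W (nf d) = W (nf d')"
    by (rule ext) (simp add: d d' W_madd W_mscal W_single Gs)
  ultimately show ?thesis by blast
qed

lemma steps_back:
  assumes "steps d e" "ok (nf e)"
  shows "ok (nf d) \<and> W (nf d) = W (nf e)"
  using assms
  by (induction rule: converse_rtranclp_induct) (auto dest: step_back)


lemma mscal_madd: "mscal a (madd f g) = madd (mscal a f) (mscal a g)"
  by (rule ext) (auto simp: mscal_def madd_def ring_distribs split: option.splits)
lemma mscal_mscal: "mscal a (mscal b f) = mscal (a * b) f"
  by (rule ext) (auto simp: mscal_def option.map_comp o_def mult.assoc)
lemma mscal_one: "mscal 1 f = f"
  by (rule ext) (auto simp: mscal_def option.map_ident)
lemma madd_empty: "madd f Map.empty = f"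
  by (rule ext) (auto simp: madd_def split: option.splits)
lemma madd_empty_l: "madd Map.empty f = f"
  by (rule ext) (auto simp: madd_def split: option.splits)
lemma madd_assoc: "madd (madd f g) h = madd f (madd g h)"
  by (rule ext) (auto simp: madd_def add.assoc split: option.splits)
lemma madd_comm: "madd f g = madd g f"
  by (rule ext) (auto simp: madd_def add.commute split: option.splits)
lemma madd_lcomm: "madd f (madd g h) = madd g (madd f h)"
  by (metis madd_assoc madd_comm)
lemma mscal_single: "mscal a [s\<mapsto>1] = [s\<mapsto>a]"
  by (rule ext) (auto simp: mscal_def)

lemma step_lift1: "step a a' \<Longrightarrow> step (DPlus (DScal \<beta> a) c) (DPlus (DScal \<beta> a') c)"
proof -
  assume "step a a'"
  then obtain \<alpha> s s' r where at: "atomic s s'"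
    and d: "nf a = madd (mscal \<alpha> [s\<mapsto>1]) (nf r)"
    and d': "nf a' = madd (mscal \<alpha> (nf s')) (nf r)"
    using step_nf by blast
  show ?thesis unfolding step_def equiv_dist_def
    apply (rule exI[of _ "\<beta> * \<alpha>"], rule exI[of _ s], rule exI[of _ s'],
        rule exI[of _ "DPlus (DScal \<beta> r) c"])
    using at by (simp add: d d' mscal_madd mscal_mscal madd_assoc)
qed

lemma step_lift2: "step c c' \<Longrightarrow> step (DPlus e c) (DPlus e c')"
proof -
  assume "step c c'"
  then obtain \<alpha> s s' r where at: "atomic s s'"
    and d: "nf c = madd (mscal \<alpha> [s\<mapsto>1]) (nf r)"
    and d': "nf c' = madd (mscal \<alpha> (nf s')) (nf r)"
    using step_nf by blast
  show ?thesis unfolding step_def equiv_dist_def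
    apply (rule exI[of _ "\<alpha>"], rule exI[of _ s], rule exI[of _ s'],
        rule exI[of _ "DPlus e r"])
    using at by (simp add: d d' madd_lcomm)
qed

lemma steps_lift1: "steps a a' \<Longrightarrow> steps (DPlus (DScal \<beta> a) c) (DPlus (DScal \<beta> a') c)"
  by (induction rule: rtranclp_induct) (auto intro: rtranclp.rtrancl_into_rtrancl step_lift1)

lemma steps_lift2: "steps c c' \<Longrightarrow> steps (DPlus e c) (DPlus e c')"
  by (induction rule: rtranclp_induct) (auto intro: rtranclp.rtrancl_into_rtrancl step_lift2)

lemma step_nf_cong: "step d e \<Longrightarrow> nf d = nf d0 \<Longrightarrow> step d0 e"
  unfolding step_def equiv_dist_def by metis

lemma steps_transfer: "steps d e \<Longrightarrow> nf d = nf d0 \<Longrightarrow> \<exists>e'. steps d0 e' \<and> nf e' = nf e"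
  by (erule converse_rtranclpE) (auto intro: converse_rtranclp_into_rtranclp step_nf_cong)

definition linout :: "(val \<Rightarrow> dist) \<Rightarrow> (complex \<times> val) list \<Rightarrow> dist" where
  "linout g ws = foldr (\<lambda>(\<beta>, w) acc. DPlus (DScal \<beta> (g w)) acc) ws DZero"

lemma steps_lin: "(\<forall>p\<in>set ws. steps (substd x (snd p) t) (g (snd p))) \<Longrightarrow>
   steps (lin_subst x t ws) (linout g ws)"
proof (induction ws)
  case Nil
  then show ?case by (simp add: lin_subst_def linout_def)
next
  case (Cons p ws)
  obtain \<beta> w where p: "p = (\<beta>, w)" by (cases p)
  have 1: "steps (substd x w t) (g w)" using Cons.prems p by auto
  have 2: "steps (lin_subst x t ws) (linout g ws)" using Cons by auto
  have "steps (DPlus (DScal \<beta> (substd x w t)) (lin_subst x t ws))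
              (DPlus (DScal \<beta> (g w)) (lin_subst x t ws))"
    by (rule steps_lift1[OF 1])
  also have "steps \<dots> (DPlus (DScal \<beta> (g w)) (linout g ws))"
    by (rule steps_lift2[OF 2])
  finally show ?case by (simp add: p lin_subst_def linout_def)
qed

lemma dom_list: "dom (nf (list_dist ws)) = (\<lambda>p. Val (snd p)) ` set ws"
  by (induction ws) (simp_all add: list_dist_def split_def)

abbreviation T :: trm where "T \<equiv> Val tt"
abbreviation F :: trm where "F \<equiv> Val ff"

lemma TF_ne[simp]: "tt \<noteq> ff" "ff \<noteq> tt"
  by (auto simp: tt_def ff_def)

lemma vec_linout:
  assumes "\<forall>p\<in>set ws. snd p = tt \<or> snd p = ff"
  shows "vec (nf (linout g ws)) u = vec (nf (list_dist ws)) T * vec (nf (g tt)) u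
           + vec (nf (list_dist ws)) F * vec (nf (g ff)) u"
    and "dom (nf (linout g ws)) \<subseteq> dom (nf (g tt)) \<union> dom (nf (g ff))"
  using assms
proof (induction ws)
  case Nil
  { case 1 then show ?case by (simp add: linout_def list_dist_def) }
  { case 2 then show ?case by (simp add: linout_def list_dist_def) }
next
  case (Cons p ws)
  obtain \<beta> w where p: "p = (\<beta>, w)" by (cases p)
  { case 1 then show ?case using Cons.IH(1)
      by (auto simp: p linout_def list_dist_def algebra_simps) }
  { case 2 then show ?case using Cons.IH(2)
      by (auto simp: p linout_def list_dist_def) }
qed

lemma sem_TB: "sem TB = {[T\<mapsto>1], [F\<mapsto>1]}"
proof -
  have "inl_map [Val Star\<mapsto>1] = [T\<mapsto>1]" "inr_map [Val Star\<mapsto>1] = [F\<mapsto>1]"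
    by (rule ext, auto simp: inl_map_def inr_map_def tt_def ff_def split: trm.split val.split)+
  then show ?thesis by (auto simp: TB_def)
qed

lemma span_iff: "in_span {[T\<mapsto>1], [F\<mapsto>1]} f \<longleftrightarrow> dom f \<subseteq> {T, F}"
proof
  assume "in_span {[T\<mapsto>1], [F\<mapsto>1]} f"
  then show "dom f \<subseteq> {T, F}"
    by (induction rule: in_span.induct) (auto split: if_splits)
next
  assume d: "dom f \<subseteq> {T, F}"
  let ?X = "{[T\<mapsto>1], [F\<mapsto>1]}"
  have e: "in_span ?X Map.empty" by (rule span_zero)
  have sT: "in_span ?X [T\<mapsto>a]" for a
    using span_step[OF e, of "[T\<mapsto>1]" a] by (simp add: madd_empty_l mscal_single)
  have sF: "in_span ?X [F\<mapsto>a]" for a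
    using span_step[OF e, of "[F\<mapsto>1]" a] by (simp add: madd_empty_l mscal_single)
  have sTF: "in_span ?X [T\<mapsto>a, F\<mapsto>b]" for a b
  proof -
    have "madd [T\<mapsto>a] (mscal b [F\<mapsto>1]) = [T\<mapsto>a, F\<mapsto>b]"
      by (rule ext) (auto simp: madd_def mscal_def)
    then show ?thesis using span_step[OF sT[of a], of "[F\<mapsto>1]" b] by simp
  qed
  have other: "u \<noteq> T \<Longrightarrow> u \<noteq> F \<Longrightarrow> f u = None" for u using d by auto
  show "in_span ?X f"
  proof (cases "f T"; cases "f F")
    assume "f T = None" "f F = None"
    then have "f = Map.empty" using other by (intro ext) metis
    then show ?thesis using e by simp
  next
    fix b assume "f T = None" "f F = Some b"
    then have "f = [F\<mapsto>b]" using other by (intro ext) (metis fun_upd_apply)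
    then show ?thesis using sF by simp
  next
    fix a assume "f T = Some a" "f F = None"
    then have "f = [T\<mapsto>a]" using other by (intro ext) (metis fun_upd_apply)
    then show ?thesis using sT by simp
  next
    fix a b assume "f T = Some a" "f F = Some b"
    then have "f = [T\<mapsto>a, F\<mapsto>b]" using other by (intro ext) (metis fun_upd_apply)
    then show ?thesis using sTF by simp
  qed
qed

lemma cinner2: "dom f \<subseteq> {T, F} \<Longrightarrow>
   cinner f g = cnj (vec f T) * vec g T + cnj (vec f F) * vec g F"
  by (subst cinner_sum[of "{T, F}"]) auto

definition nrm :: "cdist \<Rightarrow> complex" where
  "nrm f = cnj (vec f T) * vec f T + cnj (vec f F) * vec f F"

lemma semSB: "f \<in> sem (TSharp TB) \<longleftrightarrow> dom f \<subseteq> {T, F} \<and> nrm f = 1"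
proof -
  have "Im (nrm f) = 0" unfolding nrm_def by simp
  then have "(Re (nrm f) = 1) = (nrm f = 1)" by (simp add: complex_eq_iff)
  then show ?thesis
    by (auto simp: sem_TB span_iff cnorm_def cinner2 nrm_def)
qed

lemma vals_ok: "dom f \<subseteq> {T, F} \<Longrightarrow> ok f \<and> W f = vec f"
proof
  assume d: "dom f \<subseteq> {T, F}"
  have G: "Gv (Val v) = (\<lambda>u. if u = Val v then 1 else 0)" for v
    by (rule Gv[OF ev_val])
  show "ok f" using d unfolding ok_def by (auto intro: ev_val)
  show "W f = vec f"
  proof
    fix w
    have "W f w = (\<Sum>u\<in>{T, F}. vec f u * Gv u w)" using d W_sum[of "{T, F}" f w] by simp
    also have "\<dots> = vec f w" using d by (auto simp: G intro!: vec_notin)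
    finally show "W f w = vec f w" .
  qed
qed

lemma norm_comb:
  "cnj (a*p1+b*q1)*(a*p1+b*q1) + cnj (a*p2+b*q2)*(a*p2+b*q2) =
   cnj a * a * (cnj p1*p1+cnj p2*p2) + cnj b * b * (cnj q1*q1+cnj q2*q2)
   + cnj a * b * (cnj p1*q1+cnj p2*q2) + cnj b * a * cnj (cnj p1*q1+cnj p2*q2)"
  by (simp add: algebra_simps)

lemma Lam_single_eq: "[Val (Lam x t) \<mapsto> (1::complex)] = [Val (Lam x' d) \<mapsto> 1] \<Longrightarrow> x = x' \<and> t = d"
  by (metis fun_upd_same fun_upd_apply option.distinct(1) trm.inject(1) val.inject(2))

lemma dir_if:
  assumes v1: "nf v1 \<in> sem (TSharp TB)" and v2: "nf v2 \<in> sem (TSharp TB)"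
    and s1: "steps (substd x tt t) v1" and s2: "steps (substd x ff t) v2"
    and z: "cinner (nf v1) (nf v2) = 0"
    and v: "v \<in> sem (TSharp TB)" and c: "canon ws v"
  shows "\<exists>d'. steps (lin_subst x t ws) d' \<and> nf d' \<in> sem (TSharp TB)"
proof -
  have dv: "dom v \<subseteq> {T, F}" and nv: "nrm v = 1" using v unfolding semSB by auto
  have d1: "dom (nf v1) \<subseteq> {T, F}" and n1: "nrm (nf v1) = 1" using v1 unfolding semSB by auto
  have d2: "dom (nf v2) \<subseteq> {T, F}" and n2: "nrm (nf v2) = 1" using v2 unfolding semSB by auto
  have vws: "nf (list_dist ws) = v" using c by (simp add: canon_def)
  have ws: "\<forall>p\<in>set ws. snd p = tt \<or> snd p = ff"
  proof
    fix p assume "p \<in> set ws"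
    then have "Val (snd p) \<in> dom v" using dom_list[of ws] vws by auto
    then show "snd p = tt \<or> snd p = ff" using dv by auto
  qed
  define g where "g w = (if w = tt then v1 else v2)" for w
  have gtt: "g tt = v1" and gff: "g ff = v2" by (auto simp: g_def)
  have st: "steps (lin_subst x t ws) (linout g ws)"
    by (rule steps_lin) (use ws s1 s2 in \<open>auto simp: g_def\<close>)
  have vec: "vec (nf (linout g ws)) u = vec v T * vec (nf v1) u + vec v F * vec (nf v2) u" for u
    using vec_linout(1)[OF ws, of g u] by (simp add: gtt gff vws)
  have dom: "dom (nf (linout g ws)) \<subseteq> {T, F}"
    using vec_linout(2)[OF ws, of g] d1 d2 unfolding gtt gff by blast
  have zz: "cnj (vec (nf v1) T) * vec (nf v2) T + cnj (vec (nf v1) F) * vec (nf v2) F = 0"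
    using z cinner2[OF d1] by simp
  have "nrm (nf (linout g ws)) = 1"
    unfolding nrm_def vec norm_comb zz using n1 n2 nv by (simp add: nrm_def)
  then show ?thesis using st dom unfolding semSB by auto
qed

lemma dir_only:
  assumes H: "\<forall>v\<in>sem (TSharp TB). \<forall>ws. canon ws v \<longrightarrow>
         (\<exists>d'. steps (lin_subst x t ws) d' \<and> nf d' \<in> sem (TSharp TB))"
  shows "\<exists>v1 v2. nf v1 \<in> sem (TSharp TB) \<and> nf v2 \<in> sem (TSharp TB) \<and>
       steps (substd x tt t) v1 \<and> steps (substd x ff t) v2 \<and>
       cinner (nf v1) (nf v2) = 0"
proof -
  let ?S = "sem (TSharp TB)"
  have single: "\<exists>v1. nf v1 \<in> ?S \<and> steps (substd x w t) v1" if w: "w = tt \<or> w = ff" for w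
  proof -
    have "nf (list_dist [(1, w)]) \<in> ?S" using w unfolding semSB
      by (auto simp: list_dist_def nrm_def mscal_one madd_empty)
    moreover have "canon [(1, w)] (nf (list_dist [(1, w)]))" by (simp add: canon_def)
    ultimately obtain d' where st: "steps (lin_subst x t [(1, w)]) d'" and d': "nf d' \<in> ?S"
      using H by blast
    have "nf (lin_subst x t [(1, w)]) = nf (substd x w t)"
      by (simp add: lin_subst_def mscal_one madd_empty)
    then obtain e where "steps (substd x w t) e" "nf e = nf d'"
      using steps_transfer[OF st] by blast
    then show ?thesis using d' by metis
  qed
  obtain v1 where v1: "nf v1 \<in> ?S" and s1: "steps (substd x tt t) v1" using single by blast
  obtain v2 where v2: "nf v2 \<in> ?S" and s2: "steps (substd x ff t) v2" using single by blast
  have d1: "dom (nf v1) \<subseteq> {T, F}" and n1: "nrm (nf v1) = 1" using v1 unfolding semSB by auto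
  have d2: "dom (nf v2) \<subseteq> {T, F}" and n2: "nrm (nf v2) = 1" using v2 unfolding semSB by auto
  have W1: "W (nf (substd x tt t)) = vec (nf v1)"
    using steps_back[OF s1] vals_ok[OF d1] by simp
  have W2: "W (nf (substd x ff t)) = vec (nf v2)"
    using steps_back[OF s2] vals_ok[OF d2] by simp
  define z where "z = cnj (vec (nf v1) T) * vec (nf v2) T + cnj (vec (nf v1) F) * vec (nf v2) F"
  have key: "cnj a * a + cnj b * b + cnj a * b * z + cnj b * a * cnj z = 1"
    if ab: "cnj a * a + cnj b * b = 1" for a b
  proof -
    let ?ws = "[(a, tt), (b, ff)]"
    have "nf (list_dist ?ws) \<in> ?S" using ab unfolding semSB
      by (simp add: list_dist_def nrm_def)
    moreover have "canon ?ws (nf (list_dist ?ws))" by (simp add: canon_def)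
    ultimately obtain d' where st: "steps (lin_subst x t ?ws) d'" and d': "nf d' \<in> ?S"
      using H by blast
    have dd: "dom (nf d') \<subseteq> {T, F}" and nd: "nrm (nf d') = 1" using d' unfolding semSB by auto
    have "W (nf (lin_subst x t ?ws)) = W (nf d')"
      using steps_back[OF st] vals_ok[OF dd] by simp
    also have "\<dots> = vec (nf d')" using vals_ok[OF dd] by simp
    finally have eq: "vec (nf d') u = a * vec (nf v1) u + b * vec (nf v2) u" for u
      by (drule_tac fun_cong[of _ _ u])
         (simp add: lin_subst_def W_madd W_mscal W1 W2 madd_empty)
    show ?thesis using nd unfolding nrm_def eq norm_comb z_def[symmetric] n1[unfolded nrm_def]
      n2[unfolded nrm_def] by simp
  qed
  define r :: complex where "r = of_real (1 / sqrt 2)"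
  have cr: "cnj r = r" by (simp add: r_def)
  have rr: "r * r = 1/2"
    by (simp add: r_def of_real_mult[symmetric] del: of_real_mult) 
  have c0: "cnj r * r = 1/2" using cr rr by simp
  have c1: "cnj r * (\<i>*r) = \<i>/2" using cr rr by (simp add: algebra_simps)
  have c2: "cnj (\<i>*r) * r = -\<i>/2" using cr rr by (simp add: algebra_simps)
  have c3: "cnj (\<i>*r) * (\<i>*r) = 1/2" using cr rr by (simp add: algebra_simps)
  have k1: "1/2 + 1/2 + 1/2 * z + 1/2 * cnj z = (1::complex)"
    using key[of r r] unfolding c0 by simp
  have k2: "1/2 + 1/2 + \<i>/2 * z + -\<i>/2 * cnj z = (1::complex)"
    using key[of r "\<i>*r"] unfolding c0 c1 c2 c3 by simp
  have e1: "z + cnj z = 0" using k1 by (simp add: field_simps)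
  have e2: "z - cnj z = 0" using k2 by (simp add: field_simps)
  have "2 * z = 0" using e1 e2 by (metis add_diff_cancel_left' add_diff_eq diff_add_cancel diff_zero mult_2)
  then have "z = 0" by simp
  then have "cinner (nf v1) (nf v2) = 0" using cinner2[OF d1] z_def by simp
  then show ?thesis using v1 v2 s1 s2 by blast
qed

theorem proposition5:
  fixes x :: name and t :: dist
  assumes "closed_v (Lam x t)"
  shows "[Val (Lam x t) \<mapsto> 1] \<in> sem (TArr (TSharp TB) (TSharp TB)) \<longleftrightarrow>
    (\<exists>v1 v2. nf v1 \<in> sem (TSharp TB) \<and> nf v2 \<in> sem (TSharp TB) \<and>
       steps (substd x tt t) v1 \<and> steps (substd x ff t) v2 \<and>
       cinner (nf v1) (nf v2) = 0)"
proof
  assume "[Val (Lam x t) \<mapsto> 1] \<in> sem (TArr (TSharp TB) (TSharp TB))"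
  then obtain x' d where eq: "[Val (Lam x t) \<mapsto> 1] = [Val (Lam x' d) \<mapsto> (1::complex)]"
    and H: "\<forall>v\<in>sem (TSharp TB). \<forall>ws. canon ws v \<longrightarrow>
         (\<exists>d'. steps (lin_subst x' d ws) d' \<and> nf d' \<in> sem (TSharp TB))"
    by auto
  from Lam_single_eq[OF eq] H show "\<exists>v1 v2. nf v1 \<in> sem (TSharp TB) \<and> nf v2 \<in> sem (TSharp TB) \<and>
       steps (substd x tt t) v1 \<and> steps (substd x ff t) v2 \<and>
       cinner (nf v1) (nf v2) = 0" by (intro dir_only) auto
next
  assume "\<exists>v1 v2. nf v1 \<in> sem (TSharp TB) \<and> nf v2 \<in> sem (TSharp TB) \<and>
       steps (substd x tt t) v1 \<and> steps (substd x ff t) v2 \<and>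
       cinner (nf v1) (nf v2) = 0"
  then obtain v1 v2 where h: "nf v1 \<in> sem (TSharp TB)" "nf v2 \<in> sem (TSharp TB)"
       "steps (substd x tt t) v1" "steps (substd x ff t) v2" "cinner (nf v1) (nf v2) = 0"
    by blast
  show "[Val (Lam x t) \<mapsto> 1] \<in> sem (TArr (TSharp TB) (TSharp TB))"
    unfolding sem.simps(4) using assms dir_if[OF h] by blast
qed

end
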